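(* Let $0<R_{\rm id}<R_{\rm d}$, and let $\Omega$, $\Gamma_{\rm d}$, $\Gamma_{\rm id}$, $n$, $(\overline u,\overline q)$, $\omega^*$, $v(\omega)$, $\widehat v(\omega)$, $J'(\omega)$, the iteration $\omega_{k+1}=\omega_k-\rho_kJ'(\omega_k)$, $\mu_k=\omega^*-\omega_k$ and $C_j$ be as in the context. If for some $k$ the error has the finite Fourier expansion $\mu_k=\sum_{M\le|j|\le N}a_j^{(k)}e^{ij\theta}$ (integers $N\ge M\ge0$), then $$J'(\omega_k)=-\sum_{M\le|j|\le N}C_ja_j^{(k)}e^{ij\theta}\quad\text{on }\Gamma_{\rm id},$$ and consequently $\mu_{k+1}=\sum_{M\le|j|\le N}a_j^{(k+1)}e^{ij\theta}$ with $$a_j^{(k+1)}=(1-C_j\rho_k)\,a_j^{(k)}\qquad (M\le|j|\le N).$$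
   Context: Setting: $0<R_{\rm id}<R_{\rm d}$; $\Omega=\{(x,y): R_{\rm id}^2<x^2+y^2<R_{\rm d}^2\}$ is an annulus with outer boundary $\Gamma_{\rm d}=\{x^2+y^2=R_{\rm d}^2\}$ and inner boundary $\Gamma_{\rm id}=\{x^2+y^2=R_{\rm id}^2\}$; $(r,\theta)$ are polar coordinates; $n$ is the unit outward normal to $\partial\Omega$ (so $\partial/\partial n=\partial/\partial r$ on $\Gamma_{\rm d}$ and $\partial/\partial n=-\partial/\partial r$ on $\Gamma_{\rm id}$). Given Cauchy data $(\overline u,\overline q)$ on $\Gamma_{\rm d}$. For a boundary value $\omega$ on $\Gamma_{\rm id}$, $v(\omega)$ denotes the solution of the primary problem $-\Delta v=0$ in $\Omega$, $\partial v/\partial n=\overline q$ on $\Gamma_{\rm d}$, $v=\omega$ on $\Gamma_{\rm id}$; $\widehat v(\omega)$ denotes the solution of the adjoint problem $-\Delta \widehat v=0$ in $\Omega$, $\partial\widehat v/\partial n=2(v(\omega)-\overline u)$ on $\Gamma_{\rm d}$, $\widehat v=0$ on $\Gamma_{\rm id}$; and $J'(\omega):=-\partial\widehat v(\omega)/\partial n|_{\Gamma_{\rm id}}$. The exact boundary value $\omega^*$ is assumed to exist, i.e. $v(\omega^* )|_{\Gamma_{\rm d}}=\overline u$. Starting from $\omega_0$ and step sizes $\rho_k>0$, the iteration is $\omega_{k+1}=\omega_k-\rho_kJ'(\omega_k)$ (with exact solution of the boundary value problems), and $\mu_k:=\omega^*-\omega_k$. For integers $j$, $$C_j:=\frac{8R_{\rm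 d}^{2|j|+1}R_{\rm id}^{2|j|-1}}{(R_{\rm id}^{2|j|}+R_{\rm d}^{2|j|})^2}.$$ Functions on $\Gamma_{\rm id}$ may be complex-valued; Fourier expansions are in $e^{ij\theta}$. *)

theory Defs
  imports "HOL-Analysis.Analysis"
begin

(* The plane R^2 is identified with the complex numbers; functions may be complex-valued. *)

definition annulus :: "real \<Rightarrow> real \<Rightarrow> complex set" where
  "annulus Rid Rd = {z. Rid < cmod z \<and> cmod z < Rd}"

definition cl_annulus :: "real \<Rightarrow> real \<Rightarrow> complex set" where
  "cl_annulus Rid Rd = {z. Rid \<le> cmod z \<and> cmod z \<le> Rd}"

definition dx :: "(complex \<Rightarrow> complex) \<Rightarrow> complex \<Rightarrow> complex" where
  "dx v z = vector_derivative (\<lambda>t::real. v (z + of_real t)) (at 0)"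

definition dy :: "(complex \<Rightarrow> complex) \<Rightarrow> complex \<Rightarrow> complex" where
  "dy v z = vector_derivative (\<lambda>t::real. v (z + \<i> * of_real t)) (at 0)"

definition harmonic_C2_on :: "complex set \<Rightarrow> (complex \<Rightarrow> complex) \<Rightarrow> bool" where
  "harmonic_C2_on S v \<longleftrightarrow>
     (\<forall>z\<in>S. v differentiable (at z) \<and> dx v differentiable (at z) \<and> dy v differentiable (at z)
            \<and> - (dx (dx v) z + dy (dy v) z) = 0)
     \<and> continuous_on S (dx (dx v)) \<and> continuous_on S (dx (dy v))
     \<and> continuous_on S (dy (dx v)) \<and> continuous_on S (dy (dy v))"

definition C1_deriv_on :: "complex set \<Rightarrow> (complex \<Rightarrow> complex) \<Rightarrow> (complex \<Rightarrow> complex \<Rightarrow> complex) \<Rightarrow> bool" where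
  "C1_deriv_on S v v' \<longleftrightarrow>
     (\<forall>z\<in>S. (v has_derivative v' z) (at z within S)) \<and> (\<forall>h. continuous_on S (\<lambda>z. v' z h))"

(* normal derivatives (unit outward normal n) at the boundary point with polar angle theta:
   on Gamma_d, d/dn = d/dr; on Gamma_id, d/dn = - d/dr *)
definition normal_deriv_d :: "real \<Rightarrow> (complex \<Rightarrow> complex \<Rightarrow> complex) \<Rightarrow> real \<Rightarrow> complex" where
  "normal_deriv_d Rd v' \<theta> = v' (of_real Rd * cis \<theta>) (cis \<theta>)"

definition normal_deriv_id :: "real \<Rightarrow> (complex \<Rightarrow> complex \<Rightarrow> complex) \<Rightarrow> real \<Rightarrow> complex" where
  "normal_deriv_id Rid v' \<theta> = - v' (of_real Rid * cis \<theta>) (cis \<theta>)"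

definition mixed_bvp_solution ::
  "real \<Rightarrow> real \<Rightarrow> (real \<Rightarrow> complex) \<Rightarrow> (real \<Rightarrow> complex) \<Rightarrow> (complex \<Rightarrow> complex) \<Rightarrow> (complex \<Rightarrow> complex \<Rightarrow> complex) \<Rightarrow> bool" where
  "mixed_bvp_solution Rid Rd g w v v' \<longleftrightarrow>
     harmonic_C2_on (annulus Rid Rd) v \<and> C1_deriv_on (cl_annulus Rid Rd) v v'
     \<and> (\<forall>\<theta>. normal_deriv_d Rd v' \<theta> = g \<theta>)
     \<and> (\<forall>\<theta>. v (of_real Rid * cis \<theta>) = w \<theta>)"

definition Jprime :: "real \<Rightarrow> (complex \<Rightarrow> complex \<Rightarrow> complex) \<Rightarrow> real \<Rightarrow> complex" where
  "Jprime Rid vh' \<theta> = - normal_deriv_id Rid vh' \<theta>"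

definition Cj :: "real \<Rightarrow> real \<Rightarrow> int \<Rightarrow> real" where
  "Cj Rid Rd j = 8 * Rd powi (2 * \<bar>j\<bar> + 1) * Rid powi (2 * \<bar>j\<bar> - 1)
                 / (Rid powi (2 * \<bar>j\<bar>) + Rd powi (2 * \<bar>j\<bar>))^2"

definition freqs :: "nat \<Rightarrow> nat \<Rightarrow> int set" where
  "freqs M N = {j. int M \<le> \<bar>j\<bar> \<and> \<bar>j\<bar> \<le> int N}"

end

theory Submission
  imports Defs
begin


lemma lin_decomp:
  assumes "bounded_linear (D :: complex \<Rightarrow> complex)"
  shows "D h = of_real (Re h) * D 1 + of_real (Im h) * D \<i>"
proof -
  interpret bounded_linear D by fact
  have "h = Re h *\<^sub>R 1 + Im h *\<^sub>R \<i>" by (simp add: complex_eq_iff)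
  then have "D h = D (Re h *\<^sub>R 1 + Im h *\<^sub>R \<i>)" by simp
  also have "\<dots> = Re h *\<^sub>R D 1 + Im h *\<^sub>R D \<i>" by (simp add: add scaleR)
  finally show ?thesis by (simp add: scaleR_conv_of_real)
qed

lemma deriv_decomp:
  assumes "(f has_derivative (D :: complex \<Rightarrow> complex)) F"
  shows "(f has_derivative (\<lambda>h. of_real (Re h) * D 1 + of_real (Im h) * D \<i>)) F"
proof -
  show ?thesis using assms
    by (rule has_derivative_eq_rhs) (rule ext, rule lin_decomp[OF has_derivative_bounded_linear[OF assms]])
qed

lemma dx_dy_of_deriv:
  assumes "(f has_derivative D) (at z)"
  shows "dx f z = D 1" "dy f z = D \<i>"
proof -
  have bl: "bounded_linear D" using has_derivative_bounded_linear[OF assms] .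
  have "((\<lambda>t::real. z + of_real t) has_derivative (\<lambda>t. of_real t)) (at 0)"
    by (auto intro!: derivative_eq_intros)
  from has_derivative_compose[OF this, of f D] assms
  have "((\<lambda>t::real. f (z + of_real t)) has_derivative (\<lambda>t. D (of_real t))) (at 0)" by simp
  moreover have "(\<lambda>t. D (of_real t)) = (\<lambda>t. t *\<^sub>R D 1)"
  proof
    fix t :: real
    have "(of_real t :: complex) = t *\<^sub>R 1" by (simp add: scaleR_conv_of_real)
    then show "D (of_real t) = t *\<^sub>R D 1" using bl
      by (simp add: bounded_linear.linear linear_scale)
  qed
  ultimately have "((\<lambda>t::real. f (z + of_real t)) has_vector_derivative D 1) (at 0)"
    by (simp add: has_vector_derivative_def)
  then show "dx f z = D 1" unfolding dx_def by (rule vector_derivative_at)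
  have "((\<lambda>t::real. z + \<i> * of_real t) has_derivative (\<lambda>t. \<i> * of_real t)) (at 0)"
    by (auto intro!: derivative_eq_intros)
  from has_derivative_compose[OF this, of f D] assms
  have "((\<lambda>t::real. f (z + \<i> * of_real t)) has_derivative (\<lambda>t. D (\<i> * of_real t))) (at 0)" by simp
  moreover have "(\<lambda>t. D (\<i> * of_real t)) = (\<lambda>t. t *\<^sub>R D \<i>)"
  proof
    fix t :: real
    have "\<i> * of_real t = t *\<^sub>R \<i>" by (simp add: scaleR_conv_of_real mult.commute)
    then show "D (\<i> * of_real t) = t *\<^sub>R D \<i>" using bl
      by (simp add: bounded_linear.linear linear_scale)
  qed
  ultimately have "((\<lambda>t::real. f (z + \<i> * of_real t)) has_vector_derivative D \<i>) (at 0)"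
    by (simp add: has_vector_derivative_def)
  then show "dy f z = D \<i>" unfolding dy_def by (rule vector_derivative_at)
qed




lemma deriv_of_differentiable:
  assumes "f differentiable (at z)"
  shows "(f has_derivative (\<lambda>h. of_real (Re h) * dx f z + of_real (Im h) * dy f z)) (at z)"
proof -
  obtain D where D: "(f has_derivative D) (at z)" using assms by (auto simp: differentiable_def)
  show ?thesis using deriv_decomp[OF D] dx_dy_of_deriv[OF D] by simp
qed

lemma polar_r_deriv:
  assumes "(g has_derivative (\<lambda>h. of_real (Re h) * gx + of_real (Im h) * gy)) (at (of_real r * cis t))"
  shows "((\<lambda>r. g (of_real r * cis t)) has_vector_derivative
            (of_real (cos t) * gx + of_real (sin t) * gy)) (at r)"
proof -
  have "((\<lambda>r::real. of_real r * cis t) has_derivative (\<lambda>h. of_real h * cis t)) (at r)"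
    by (auto intro!: derivative_eq_intros)
  from has_derivative_compose[OF this assms]
  have "((\<lambda>r. g (of_real r * cis t)) has_derivative
     (\<lambda>h. of_real (Re (of_real h * cis t)) * gx + of_real (Im (of_real h * cis t)) * gy)) (at r)" .
  then show ?thesis unfolding has_vector_derivative_def
    by (rule has_derivative_eq_rhs) (auto simp: scaleR_conv_of_real algebra_simps)
qed

lemma polar_t_deriv:
  assumes "(g has_derivative (\<lambda>h. of_real (Re h) * gx + of_real (Im h) * gy)) (at (of_real r * cis t))"
  shows "((\<lambda>t. g (of_real r * cis t)) has_vector_derivative
            (of_real r * (- of_real (sin t) * gx + of_real (cos t) * gy))) (at t)"
proof -
  have "((\<lambda>t::real. of_real r * cis t) has_derivative (\<lambda>h. of_real r * (h *\<^sub>R (\<i> * cis t)))) (at t)"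
    by (auto intro!: derivative_eq_intros)
  from has_derivative_compose[OF this assms]
  have "((\<lambda>t. g (of_real r * cis t)) has_derivative
     (\<lambda>h. of_real (Re (of_real r * (h *\<^sub>R (\<i> * cis t)))) * gx
        + of_real (Im (of_real r * (h *\<^sub>R (\<i> * cis t)))) * gy)) (at t)" .
  then show ?thesis unfolding has_vector_derivative_def
    by (rule has_derivative_eq_rhs) (auto simp: scaleR_conv_of_real algebra_simps)
qed

lemma open_annulus: "open (annulus a b)"
  unfolding annulus_def by (intro open_Collect_conj open_Collect_less continuous_intros)

lemma annulus_sub: "annulus a b \<subseteq> cl_annulus a b"
  unfolding annulus_def cl_annulus_def by auto

lemma polar_in_annulus:
  assumes "0 < a" "a < r" "r < b" shows "of_real r * cis t \<in> annulus a b"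
  using assms by (auto simp: annulus_def norm_mult)

lemma polar_in_cl_annulus:
  assumes "0 < a" "a \<le> r" "r \<le> b" shows "of_real r * cis t \<in> cl_annulus a b"
  using assms by (auto simp: cl_annulus_def norm_mult)

lemma polar_cont:
  assumes "continuous_on S g" "\<And>p. p \<in> A \<Longrightarrow> of_real (fst p) * cis (snd p) \<in> S"
  shows "continuous_on A (\<lambda>p. g (of_real (fst p) * cis (snd p)))"
  by (rule continuous_on_compose2[OF assms(1)]) (auto intro!: continuous_intros assms(2))

lemma polar_cont_t:
  assumes "continuous_on S g" "\<And>t. of_real r * cis t \<in> S"
  shows "continuous_on X (\<lambda>t. g (of_real r * cis t))"
  by (rule continuous_on_compose2[OF assms(1)]) (auto intro!: continuous_intros assms(2))




lemma energy_unique: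
  fixes w wx wy Xx Xy Yx Yy :: "complex \<Rightarrow> complex" and W :: "complex \<Rightarrow> complex \<Rightarrow> complex"
  assumes Rid: "0 < Rid" "Rid < Rd"
  and d1: "\<And>z. z \<in> annulus Rid Rd \<Longrightarrow> (w has_derivative (\<lambda>h. of_real (Re h) * wx z + of_real (Im h) * wy z)) (at z)"
  and d2: "\<And>z. z \<in> annulus Rid Rd \<Longrightarrow> (wx has_derivative (\<lambda>h. of_real (Re h) * Xx z + of_real (Im h) * Xy z)) (at z)"
  and d3: "\<And>z. z \<in> annulus Rid Rd \<Longrightarrow> (wy has_derivative (\<lambda>h. of_real (Re h) * Yx z + of_real (Im h) * Yy z)) (at z)"
  and lap: "\<And>z. z \<in> annulus Rid Rd \<Longrightarrow> Xx z + Yy z = 0"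
  and cXx: "continuous_on (annulus Rid Rd) Xx" and cXy: "continuous_on (annulus Rid Rd) Xy"
  and cYx: "continuous_on (annulus Rid Rd) Yx" and cYy: "continuous_on (annulus Rid Rd) Yy"
  and dW: "\<And>z. z \<in> cl_annulus Rid Rd \<Longrightarrow> (w has_derivative W z) (at z within cl_annulus Rid Rd)"
  and cW: "\<And>h. continuous_on (cl_annulus Rid Rd) (\<lambda>z. W z h)"
  and bd: "\<And>t. W (of_real Rd * cis t) (cis t) = 0"
  and bi: "\<And>t. w (of_real Rid * cis t) = 0"
  shows "\<forall>z \<in> cl_annulus Rid Rd. w z = 0"
proof -
  define S where "S = annulus Rid Rd"
  define T where "T = cl_annulus Rid Rd"
  define I where "I = cbox (-pi) (pi::real)"
  define pz where "pz = (\<lambda>r t. (of_real r :: complex) * cis t)"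
  have inS: "pz r t \<in> S" if "r \<in> {Rid<..<Rd}" for r t
    using polar_in_annulus[of Rid r Rd t] that Rid by (auto simp: S_def pz_def)
  have inT: "pz r t \<in> T" if "r \<in> {Rid..Rd}" for r t
    using polar_in_cl_annulus[of Rid r Rd t] that Rid by (auto simp: T_def pz_def)
  have WS: "W z = (\<lambda>h. of_real (Re h) * wx z + of_real (Im h) * wy z)" if "z \<in> S" for z
  proof -
    have zS: "z \<in> annulus Rid Rd" using that by (simp add: S_def)
    have zT: "z \<in> cl_annulus Rid Rd" using zS annulus_sub by blast
    have "at z within cl_annulus Rid Rd = at z"
      by (rule at_within_open_subset[OF zS open_annulus annulus_sub])
    hence "(w has_derivative W z) (at z)" using dW[OF zT] by simp
    thus ?thesis by (rule has_derivative_unique[OF _ d1[OF zS]])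
  qed
  have Wlin: "W z h = of_real (Re h) * W z 1 + of_real (Im h) * W z \<i>" if "z \<in> T" for z h
    by (rule lin_decomp[OF has_derivative_bounded_linear[OF dW]]) (use that in \<open>simp add: T_def\<close>)
  have cw: "continuous_on T w" unfolding T_def
    using dW by (meson continuous_on_eq_continuous_within has_derivative_continuous)
  have cwx: "continuous_on S wx"
    using d2 S_def by (meson continuous_at_imp_continuous_on has_derivative_continuous)
  have cwy: "continuous_on S wy"
    using d3 S_def by (meson continuous_at_imp_continuous_on has_derivative_continuous)
  define U where "U = (\<lambda>r t. w (pz r t))"
  define P where "P = (\<lambda>r t. W (pz r t) (cis t))"
  define Pi where "Pi = (\<lambda>r t. of_real (cos t) * wx (pz r t) + of_real (sin t) * wy (pz r t))"
  define Pr where "Pr = (\<lambda>r t. of_real (cos t) * (of_real (cos t) * Xx (pz r t) + of_real (sin t) * Xy (pz r t))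
       + of_real (sin t) * (of_real (cos t) * Yx (pz r t) + of_real (sin t) * Yy (pz r t)))"
  define Q where "Q = (\<lambda>r t. of_real r * (- of_real (sin t) * wx (pz r t) + of_real (cos t) * wy (pz r t)))"
  define Qt where "Qt = (\<lambda>r t. of_real r * (- of_real (cos t) * wx (pz r t) - of_real (sin t) * wy (pz r t))
       + (- of_real (sin t) * (of_real r * (of_real r * (- of_real (sin t) * Xx (pz r t) + of_real (cos t) * Xy (pz r t))))
       + of_real (cos t) * (of_real r * (of_real r * (- of_real (sin t) * Yx (pz r t) + of_real (cos t) * Yy (pz r t))))))"
  have PPi: "P r t = Pi r t" if "r \<in> {Rid<..<Rd}" for r t
    using WS[OF inS[OF that]] by (simp add: P_def Pi_def)
  have dUr: "((\<lambda>r. U r t) has_vector_derivative Pi r t) (at r)" if "r \<in> {Rid<..<Rd}" for r t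
    unfolding U_def Pi_def pz_def
    by (rule polar_r_deriv) (use d1 inS[OF that] in \<open>auto simp: pz_def S_def\<close>)
  have dPir: "((\<lambda>r. Pi r t) has_vector_derivative Pr r t) (at r)" if "r \<in> {Rid<..<Rd}" for r t
  proof -
    have a: "((\<lambda>r. wx (pz r t)) has_vector_derivative
            (of_real (cos t) * Xx (pz r t) + of_real (sin t) * Xy (pz r t))) (at r)"
      unfolding pz_def by (rule polar_r_deriv) (use d2 inS[OF that] in \<open>auto simp: pz_def S_def\<close>)
    have b: "((\<lambda>r. wy (pz r t)) has_vector_derivative
            (of_real (cos t) * Yx (pz r t) + of_real (sin t) * Yy (pz r t))) (at r)"
      unfolding pz_def by (rule polar_r_deriv) (use d3 inS[OF that] in \<open>auto simp: pz_def S_def\<close>)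
    show ?thesis unfolding Pi_def Pr_def
      by (intro has_vector_derivative_add has_vector_derivative_mult_right a b)
  qed
  have dUt: "((\<lambda>t. U r t) has_vector_derivative Q r t) (at t)" if "r \<in> {Rid<..<Rd}" for r t
    unfolding U_def Q_def pz_def
    by (rule polar_t_deriv) (use d1 inS[OF that] in \<open>auto simp: pz_def S_def\<close>)
  have dQt: "((\<lambda>t. Q r t) has_vector_derivative Qt r t) (at t)" if "r \<in> {Rid<..<Rd}" for r t
  proof -
    have a: "((\<lambda>t. wx (pz r t)) has_vector_derivative
            (of_real r * (- of_real (sin t) * Xx (pz r t) + of_real (cos t) * Xy (pz r t)))) (at t)"
      unfolding pz_def by (rule polar_t_deriv) (use d2 inS[OF that] in \<open>auto simp: pz_def S_def\<close>)
    have b: "((\<lambda>t. wy (pz r t)) has_vector_derivative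
            (of_real r * (- of_real (sin t) * Yx (pz r t) + of_real (cos t) * Yy (pz r t)))) (at t)"
      unfolding pz_def by (rule polar_t_deriv) (use d3 inS[OF that] in \<open>auto simp: pz_def S_def\<close>)
    have c: "((\<lambda>t. - of_real (sin t) :: complex) has_vector_derivative - of_real (cos t)) (at t)"
      by (auto intro!: derivative_eq_intros)
    have d: "((\<lambda>t. of_real (cos t) :: complex) has_vector_derivative - of_real (sin t)) (at t)"
      by (auto intro!: derivative_eq_intros)
    have "((\<lambda>t. of_real r * (- of_real (sin t) * wx (pz r t) + of_real (cos t) * wy (pz r t)))
       has_vector_derivative
       of_real r * ((- of_real (sin t) * (of_real r * (- of_real (sin t) * Xx (pz r t) + of_real (cos t) * Xy (pz r t)))
          + - of_real (cos t) * wx (pz r t))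
        + (of_real (cos t) * (of_real r * (- of_real (sin t) * Yx (pz r t) + of_real (cos t) * Yy (pz r t)))
          + - of_real (sin t) * wy (pz r t)))) (at t)"
      by (intro has_vector_derivative_mult_right has_vector_derivative_add
          has_vector_derivative_mult a b c d)
    then show ?thesis unfolding Q_def Qt_def
      by (rule has_vector_derivative_eq_rhs) (simp add: algebra_simps)
  qed
  have key: "of_real r * Pi r t + of_real r * of_real r * Pr r t + Qt r t = 0"
    if "r \<in> {Rid<..<Rd}" for r t
  proof -
    have cs: "(of_real (cos t) :: complex)^2 + (of_real (sin t))^2 = 1"
      by (metis of_real_add of_real_1 of_real_power sin_cos_squared_add2)
    have "of_real r * Pi r t + of_real r * of_real r * Pr r t + Qt r t
          = of_real r * of_real r * (Xx (pz r t) + Yy (pz r t)) * ((of_real (cos t))^2 + (of_real (sin t))^2)"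
      unfolding Pi_def Pr_def Qt_def by (simp add: algebra_simps power2_eq_square)
    also have "\<dots> = 0" using lap inS[OF that] by (simp add: S_def)
    finally show ?thesis .
  qed
  define fi where "fi = (\<lambda>r t. r * Re (cnj (U r t) * Pi r t))"
  define fr where "fr = (\<lambda>r t. Re (cnj (U r t) * Pi r t) + r * Re (cnj (U r t) * Pr r t + cnj (Pi r t) * Pi r t))"
  define g where "g = (\<lambda>r t. r * (cmod (Pi r t))^2 + (cmod (Q r t))^2 / r)"
  define k where "k = (\<lambda>r t. Re (cnj (U r t) * Q r t))"
  define kd where "kd = (\<lambda>r t. Re (cnj (U r t) * Qt r t + cnj (Q r t) * Q r t))"
  have dfi: "((\<lambda>r. fi r t) has_field_derivative fr r t) (at r)" if "r \<in> {Rid<..<Rd}" for r t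
  proof -
    have "((\<lambda>r. cnj (U r t) * Pi r t) has_vector_derivative (cnj (U r t) * Pr r t + cnj (Pi r t) * Pi r t)) (at r)"
      by (intro has_vector_derivative_mult has_vector_derivative_cnj dUr dPir that)
    from bounded_linear.has_vector_derivative[OF bounded_linear_Re this]
    have "((\<lambda>r. Re (cnj (U r t) * Pi r t)) has_vector_derivative Re (cnj (U r t) * Pr r t + cnj (Pi r t) * Pi r t)) (at r)" .
    then have "((\<lambda>r. Re (cnj (U r t) * Pi r t)) has_field_derivative Re (cnj (U r t) * Pr r t + cnj (Pi r t) * Pi r t)) (at r)"
      by (simp add: has_real_derivative_iff_has_vector_derivative)
    from DERIV_mult[OF DERIV_ident this]
    show ?thesis unfolding fi_def fr_def
      by (rule DERIV_cong) (simp add: algebra_simps)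
  qed
  have dk: "((\<lambda>t. k r t) has_vector_derivative kd r t) (at t)" if "r \<in> {Rid<..<Rd}" for r t
  proof -
    have "((\<lambda>t. cnj (U r t) * Q r t) has_vector_derivative (cnj (U r t) * Qt r t + cnj (Q r t) * Q r t)) (at t)"
      by (intro has_vector_derivative_mult has_vector_derivative_cnj dUt dQt that)
    from bounded_linear.has_vector_derivative[OF bounded_linear_Re this]
    show ?thesis unfolding k_def kd_def .
  qed
  have fr_eq: "fr r t = g r t - kd r t / r" if "r \<in> {Rid<..<Rd}" for r t
  proof -
    have r0: "r > 0" using that Rid by auto
    have Qt_eq: "Qt r t = - (of_real r * Pi r t) - of_real r * of_real r * Pr r t"
    proof -
      have "Qt r t = (of_real r * Pi r t + of_real r * of_real r * Pr r t + Qt r t)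
            - of_real r * Pi r t - of_real r * of_real r * Pr r t" by simp
      then show ?thesis by (simp only: key[OF that]) simp
    qed
    have n2: "(cmod z)^2 = Re z * Re z + Im z * Im z" for z :: complex
      by (simp add: cmod_power2 flip: power2_eq_square)
    have n1: "Re (cnj z * z) = (cmod z)^2" for z :: complex
      by (simp add: cmod_power2 flip: power2_eq_square)
    show ?thesis using r0
      unfolding fr_def g_def kd_def Qt_eq
      by (simp add: n2 field_simps)
  qed
  have cwxt: "continuous_on X (\<lambda>t. wx (pz r t))" "continuous_on X (\<lambda>t. wy (pz r t))"
    if "r \<in> {Rid<..<Rd}" for r X
    using polar_cont_t[OF cwx, of r] polar_cont_t[OF cwy, of r] inS[OF that] by (auto simp: pz_def)
  have cwt: "continuous_on X (\<lambda>t. w (pz r t))" if "r \<in> {Rid..Rd}" for r X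
    using polar_cont_t[OF cw, of r] inT[OF that] by (auto simp: pz_def)
  have cg: "continuous_on X (g r)" if "r \<in> {Rid<..<Rd}" for r X
    unfolding g_def Pi_def Q_def
    using that Rid by (intro continuous_intros cwxt[OF that]) auto
  have cfi: "continuous_on X (fi r)" if "r \<in> {Rid<..<Rd}" for r X
    unfolding fi_def Pi_def U_def
    using that by (intro continuous_intros cwxt[OF that] cwt) auto
  have cp: "continuous_on ({Rid<..<Rd} \<times> X) (\<lambda>p. h (pz (fst p) (snd p)))"
    if "continuous_on S h" for h X
    unfolding pz_def by (rule polar_cont[OF that]) (use inS in \<open>auto simp: pz_def\<close>)
  have cwp: "continuous_on ({Rid<..<Rd} \<times> X) (\<lambda>p. w (pz (fst p) (snd p)))" for X
    using cp[OF continuous_on_subset[OF cw]] annulus_sub S_def T_def by auto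
  have cfr: "continuous_on ({Rid<..<Rd} \<times> X) (\<lambda>(x, t). fr x t)" for X
    unfolding fr_def U_def Pi_def Pr_def split_beta'
    by (intro continuous_intros cwp cp cwx cwy cXx[folded S_def] cXy[folded S_def] cYx[folded S_def] cYy[folded S_def])
  have pzpi: "pz r (-pi) = pz r pi" for r by (simp add: pz_def complex_eq_iff)
  have int_fr: "(fr r has_integral integral I (g r)) I" if "r \<in> {Rid<..<Rd}" for r
  proof -
    have "(kd r has_integral (k r pi - k r (-pi))) {-pi..pi}"
      by (rule fundamental_theorem_of_calculus) (auto intro: has_vector_derivative_at_within dk[OF that])
    moreover have "k r pi = k r (-pi)" by (simp add: k_def U_def Q_def pzpi)
    ultimately have "(kd r has_integral 0) I" by (simp add: I_def)
    from has_integral_cmul[OF this, of "1/r"]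
    have "((\<lambda>t. kd r t / r) has_integral 0) I" by (simp add: divide_inverse mult.commute)
    from has_integral_diff[OF integrable_integral[OF integrable_continuous[OF cg[OF that]]] this[unfolded I_def]]
    have "((\<lambda>t. g r t - kd r t / r) has_integral integral I (g r)) I" by (simp add: I_def)
    moreover have "(\<lambda>t. g r t - kd r t / r) = fr r" using fr_eq[OF that] by auto
    ultimately show ?thesis by simp
  qed
  define G where "G = (\<lambda>r. integral I (g r))"
  define F where "F = (\<lambda>r. integral I (\<lambda>t. r * Re (cnj (U r t) * P r t)))"
  have dF: "(F has_field_derivative G r) (at r)" if "r \<in> {Rid<..<Rd}" for r
  proof -
    have "((\<lambda>x. integral I (fi x)) has_field_derivative integral I (fr r)) (at r within {Rid<..<Rd})"
      unfolding I_def
    proof (rule leibniz_rule_field_derivative)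
      show "((\<lambda>x. fi x t) has_field_derivative fr x t) (at x within {Rid<..<Rd})"
        if "x \<in> {Rid<..<Rd}" for x t
        using dfi[OF that] by (rule has_field_derivative_at_within)
      show "fi x integrable_on cbox (- pi) pi" if "x \<in> {Rid<..<Rd}" for x
        by (rule integrable_continuous[OF cfi[OF that]])
    qed (use cfr that in auto)
    then have "((\<lambda>x. integral I (fi x)) has_field_derivative G r) (at r)"
      using int_fr[OF that] at_within_open[OF that open_greaterThanLessThan]
      by (simp add: G_def integral_unique)
    then show ?thesis
    proof (rule has_field_derivative_transform_within_open[OF _ open_greaterThanLessThan that])
      fix x assume x: "x \<in> {Rid<..<Rd}"
      show "integral I (fi x) = F x"
        unfolding F_def fi_def using PPi[OF x] by simp
    qed
  qed
  have gnn: "0 \<le> g r t" if "r \<in> {Rid<..<Rd}" for r t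
    using that Rid unfolding g_def by (auto intro!: add_nonneg_nonneg divide_nonneg_pos)
  have Gnn: "0 \<le> G r" if "r \<in> {Rid<..<Rd}" for r
    unfolding G_def I_def by (rule integral_nonneg[OF integrable_continuous[OF cg[OF that]]]) (use gnn[OF that] in auto)
  have cWp: "continuous_on ({Rid..Rd} \<times> X) (\<lambda>p. W (pz (fst p) (snd p)) h)" for h X
    unfolding pz_def by (rule polar_cont[OF cW]) (use inT in \<open>auto simp: pz_def T_def\<close>)
  have cwp2: "continuous_on ({Rid..Rd} \<times> X) (\<lambda>p. w (pz (fst p) (snd p)))" for X
    unfolding pz_def by (rule polar_cont[OF cw]) (use inT in \<open>auto simp: pz_def\<close>)
  have cF: "continuous_on {Rid..Rd} F"
  proof -
    have "continuous_on ({Rid..Rd} \<times> I) (\<lambda>(x, t). x * Re (cnj (U x t) * P x t))"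
    proof (rule continuous_on_eq)
      show "continuous_on ({Rid..Rd} \<times> I) (\<lambda>p. fst p * Re (cnj (w (pz (fst p) (snd p))) *
          (of_real (cos (snd p)) * W (pz (fst p) (snd p)) 1 + of_real (sin (snd p)) * W (pz (fst p) (snd p)) \<i>)))"
        by (intro continuous_intros cWp cwp2)
      fix p assume "p \<in> {Rid..Rd} \<times> I"
      then have "pz (fst p) (snd p) \<in> T" using inT by auto
      then show "fst p * Re (cnj (w (pz (fst p) (snd p))) *
          (of_real (cos (snd p)) * W (pz (fst p) (snd p)) 1 + of_real (sin (snd p)) * W (pz (fst p) (snd p)) \<i>))
          = (\<lambda>(x, t). x * Re (cnj (U x t) * P x t)) p"
        using Wlin[of "pz (fst p) (snd p)" "cis (snd p)"] by (simp add: U_def P_def split_beta)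
    qed
    then show ?thesis unfolding F_def I_def by (rule integral_continuous_on_param)
  qed
  have F0: "F Rid = 0" unfolding F_def U_def using bi by (simp add: pz_def)
  have F1: "F Rd = 0" unfolding F_def P_def using bd by (simp add: pz_def)
  have Fdiff: "F differentiable (at x)" if "Rid < x" "x < Rd" for x
    using dF[of x] that by (auto intro: differentiableI has_field_derivative_imp_has_derivative)
  have Fz: "F r = 0" if "r \<in> {Rid..Rd}" for r
  proof -
    have "F r \<ge> 0"
    proof (cases "Rid < r")
      case True
      have "\<exists>l y. Rid < y \<and> y < r \<and> DERIV F y :> l \<and> F r - F Rid = (r - Rid) * l"
      proof (rule MVT[OF True])
        show "continuous_on {Rid..r} F" by (rule continuous_on_subset[OF cF]) (use that in auto)
        show "F differentiable at x" if "Rid < x" "x < r" for x using Fdiff that \<open>r \<in> {Rid..Rd}\<close> by auto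
      qed
      then obtain l y where y: "Rid < y" "y < r" "DERIV F y :> l" "F r - F Rid = (r - Rid) * l"
        by auto
      have "l = G y" using DERIV_unique[OF y(3) dF] y that by auto
      then have "l \<ge> 0" using Gnn[of y] y that by auto
      then show ?thesis using y(4) F0 True by auto
    qed (use that F0 in auto)
    moreover have "F r \<le> 0"
    proof (cases "r < Rd")
      case True
      have "\<exists>l y. r < y \<and> y < Rd \<and> DERIV F y :> l \<and> F Rd - F r = (Rd - r) * l"
      proof (rule MVT[OF True])
        show "continuous_on {r..Rd} F" by (rule continuous_on_subset[OF cF]) (use that in auto)
        show "F differentiable at x" if "r < x" "x < Rd" for x using Fdiff that \<open>r \<in> {Rid..Rd}\<close> by auto
      qed
      then obtain l y where y: "r < y" "y < Rd" "DERIV F y :> l" "F Rd - F r = (Rd - r) * l"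
        by auto
      have "l = G y" using DERIV_unique[OF y(3) dF] y that by auto
      then have "l \<ge> 0" using Gnn[of y] y that by auto
      then have "0 \<le> (Rd - r) * l" using True by simp
      then show ?thesis using y(4) F1 by linarith
    qed (use that F1 in auto)
    ultimately show ?thesis by simp
  qed
  have Gz: "G r = 0" if "r \<in> {Rid<..<Rd}" for r
  proof (rule DERIV_local_const[OF dF[OF that]])
    show "0 < min (r - Rid) (Rd - r)" using that by auto
    show "\<forall>y. \<bar>r - y\<bar> < min (r - Rid) (Rd - r) \<longrightarrow> F r = F y"
    proof (intro allI impI)
      fix y assume "\<bar>r - y\<bar> < min (r - Rid) (Rd - r)"
      then have "y \<in> {Rid..Rd}" "r \<in> {Rid..Rd}" using that by (auto simp: abs_if split: if_splits)
      then show "F r = F y" using Fz by simp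
    qed
  qed
  have Piz: "Pi r t = 0" if "r \<in> {Rid<..<Rd}" "t \<in> I" for r t
  proof -
    have "g r t = 0"
    proof (rule has_integral_0_cbox_imp_0[of "-pi" pi "g r"])
      show "continuous_on (cbox (- pi) pi) (g r)" by (rule cg[OF that(1)])
      show "0 \<le> g r x" for x by (rule gnn[OF that(1)])
      have gi: "(g r has_integral integral (cbox (-pi) pi) (g r)) (cbox (-pi) pi)"
        by (rule integrable_integral[OF integrable_continuous[OF cg[OF that(1)]]])
      have gz: "integral (cbox (-pi) pi) (g r) = 0" using Gz[OF that(1)] by (simp only: G_def I_def)
      show "(g r has_integral 0) (cbox (- pi) pi)" using gi by (simp only: gz)
      show "box (- pi) pi \<noteq> {}" using pi_gt_zero by (simp add: box_real) (use pi_gt_zero in linarith)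
      show "t \<in> cbox (- pi) pi" using that I_def by auto
    qed
    then have "r * (cmod (Pi r t))^2 = 0"
      using that(1) Rid unfolding g_def
      by (smt (verit) divide_nonneg_pos mult_nonneg_nonneg zero_le_power2 greaterThanLessThan_iff)
    then show ?thesis using that(1) Rid by auto
  qed
  show ?thesis
  proof
    fix z assume zT: "z \<in> cl_annulus Rid Rd"
    define R where "R = cmod z"
    define th where "th = Arg z"
    have zeq: "z = pz R th" using rcis_cmod_Arg[of z] by (simp add: R_def th_def pz_def rcis_def)
    have R: "Rid \<le> R" "R \<le> Rd" using zT by (auto simp: R_def cl_annulus_def)
    have thI: "th \<in> I" using Arg_bounded[of z] by (auto simp: th_def I_def)
    have "U R th = 0"
    proof (rule has_derivative_zero_unique_strong_interval[of "{Rid, R}" Rid R "\<lambda>r. U r th" 0])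
      show "continuous_on {Rid..R} (\<lambda>r. U r th)"
        unfolding U_def pz_def
        by (rule continuous_on_compose2[OF cw]) (use inT R in \<open>auto intro!: continuous_intros simp: pz_def\<close>)
      show "U Rid th = 0" using bi by (simp add: U_def pz_def)
      show "((\<lambda>r. U r th) has_derivative (\<lambda>h. 0)) (at x within {Rid..R})" if "x \<in> {Rid..R} - {Rid, R}" for x
      proof -
        have x: "x \<in> {Rid<..<Rd}" using that R by auto
        have "((\<lambda>r. U r th) has_vector_derivative 0) (at x)" using dUr[OF x, of th] Piz[OF x thI] by simp
        then show ?thesis by (auto simp: has_vector_derivative_def intro: has_derivative_at_withinI)
      qed
    qed (use R in auto)
    then show "w z = 0" by (simp add: U_def zeq)
  qed
qed




definition goodfun where
  "goodfun S u ux uy uxx uxy uyx uyy \<longleftrightarrow>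
    (\<forall>z\<in>S. (u has_derivative (\<lambda>h. of_real (Re h) * ux z + of_real (Im h) * uy z)) (at z)
         \<and> (ux has_derivative (\<lambda>h. of_real (Re h) * uxx z + of_real (Im h) * uxy z)) (at z)
         \<and> (uy has_derivative (\<lambda>h. of_real (Re h) * uyx z + of_real (Im h) * uyy z)) (at z)
         \<and> uxx z + uyy z = 0)
    \<and> continuous_on S uxx \<and> continuous_on S uxy \<and> continuous_on S uyx \<and> continuous_on S uyy"

lemma goodfun_subset: "goodfun S u ux uy uxx uxy uyx uyy \<Longrightarrow> T \<subseteq> S \<Longrightarrow> goodfun T u ux uy uxx uxy uyx uyy"
  unfolding goodfun_def by (auto intro: continuous_on_subset)

lemma goodfun_diff:
  assumes "goodfun S u ux uy uxx uxy uyx uyy" "goodfun S v vx vy vxx vxy vyx vyy"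
  shows "goodfun S (\<lambda>z. u z - v z) (\<lambda>z. ux z - vx z) (\<lambda>z. uy z - vy z) (\<lambda>z. uxx z - vxx z)
     (\<lambda>z. uxy z - vxy z) (\<lambda>z. uyx z - vyx z) (\<lambda>z. uyy z - vyy z)"
  unfolding goodfun_def
proof (intro conjI ballI continuous_on_diff)
  fix z assume z: "z \<in> S"
  note a = assms[unfolded goodfun_def, THEN conjunct1, rule_format, OF z]
  show "((\<lambda>z. u z - v z) has_derivative (\<lambda>h. of_real (Re h) * (ux z - vx z) + of_real (Im h) * (uy z - vy z))) (at z)"
    using has_derivative_diff[OF a(1)[THEN conjunct1] a(2)[THEN conjunct1]]
    by (rule has_derivative_eq_rhs) (auto simp: algebra_simps)
  show "((\<lambda>z. ux z - vx z) has_derivative (\<lambda>h. of_real (Re h) * (uxx z - vxx z) + of_real (Im h) * (uxy z - vxy z))) (at z)"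
    using has_derivative_diff[OF a(1)[THEN conjunct2, THEN conjunct1] a(2)[THEN conjunct2, THEN conjunct1]]
    by (rule has_derivative_eq_rhs) (auto simp: algebra_simps)
  show "((\<lambda>z. uy z - vy z) has_derivative (\<lambda>h. of_real (Re h) * (uyx z - vyx z) + of_real (Im h) * (uyy z - vyy z))) (at z)"
    using has_derivative_diff[OF a(1)[THEN conjunct2, THEN conjunct2, THEN conjunct1] a(2)[THEN conjunct2, THEN conjunct2, THEN conjunct1]]
    by (rule has_derivative_eq_rhs) (auto simp: algebra_simps)
  show "uxx z - vxx z + (uyy z - vyy z) = 0"
  proof -
    have "uxx z - vxx z + (uyy z - vyy z) = (uxx z + uyy z) - (vxx z + vyy z)" by (simp add: algebra_simps)
    then show ?thesis using a(1)[THEN conjunct2, THEN conjunct2, THEN conjunct2] a(2)[THEN conjunct2, THEN conjunct2, THEN conjunct2]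
      by simp
  qed
qed (use assms in \<open>auto simp: goodfun_def\<close>)

lemma solution_goodfun:
  assumes "harmonic_C2_on S v"
  shows "goodfun S v (dx v) (dy v) (dx (dx v)) (dy (dx v)) (dx (dy v)) (dy (dy v))"
proof -
  have e: "x + y = 0" if "- (x + y) = 0" for x y :: complex
    using that by (metis add.inverse_neutral minus_minus)
  show ?thesis using assms unfolding harmonic_C2_on_def goodfun_def
    by (auto intro: deriv_of_differentiable e simp del: minus_add_distrib)
qed

lemma energy_goodfun:
  fixes w :: "complex \<Rightarrow> complex"
  assumes "0 < Rid" "Rid < Rd"
  and "goodfun (annulus Rid Rd) w wx wy Xx Xy Yx Yy"
  and dW: "\<And>z. z \<in> cl_annulus Rid Rd \<Longrightarrow> (w has_derivative W z) (at z within cl_annulus Rid Rd)"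
  and cW: "\<And>h. continuous_on (cl_annulus Rid Rd) (\<lambda>z. W z h)"
  and bd: "\<And>t. W (of_real Rd * cis t) (cis t) = 0"
  and bi: "\<And>t. w (of_real Rid * cis t) = 0"
  shows "\<forall>z \<in> cl_annulus Rid Rd. w z = 0"
  using assms(3) unfolding goodfun_def
  by (intro energy_unique[OF assms(1,2) _ _ _ _ _ _ _ _ dW cW bd bi]) auto

lemma goodfun_pq:
  assumes S: "open S"
  and du: "\<And>z. z \<in> S \<Longrightarrow> (u has_derivative (\<lambda>h. p z * h + cnj (q z * h))) (at z)"
  and dp: "\<And>z. z \<in> S \<Longrightarrow> (p has_field_derivative p' z) (at z)"
  and dq: "\<And>z. z \<in> S \<Longrightarrow> (q has_field_derivative q' z) (at z)"
  and cp: "continuous_on S p'" and cq: "continuous_on S q'"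
  shows "goodfun S u (\<lambda>z. p z + cnj (q z)) (\<lambda>z. \<i> * p z - \<i> * cnj (q z))
     (\<lambda>z. p' z + cnj (q' z)) (\<lambda>z. \<i> * p' z - \<i> * cnj (q' z))
     (\<lambda>z. \<i> * p' z - \<i> * cnj (q' z)) (\<lambda>z. - p' z - cnj (q' z))"
  unfolding goodfun_def
proof (intro conjI ballI)
  fix z assume z: "z \<in> S"
  show "(u has_derivative (\<lambda>h. of_real (Re h) * (p z + cnj (q z)) + of_real (Im h) * (\<i> * p z - \<i> * cnj (q z)))) (at z)"
    using du[OF z] by (rule has_derivative_eq_rhs) (auto simp: complex_eq_iff algebra_simps)
  have dp': "(p has_derivative (\<lambda>h. p' z * h)) (at z)" using dp[OF z] by (simp add: has_field_derivative_def)
  have dq': "(q has_derivative (\<lambda>h. q' z * h)) (at z)" using dq[OF z] by (simp add: has_field_derivative_def)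
  show "((\<lambda>z. p z + cnj (q z)) has_derivative (\<lambda>h. of_real (Re h) * (p' z + cnj (q' z)) + of_real (Im h) * (\<i> * p' z - \<i> * cnj (q' z)))) (at z)"
    using has_derivative_add[OF dp' has_derivative_cnj[OF dq']]
    by (rule has_derivative_eq_rhs) (auto simp: complex_eq_iff algebra_simps)
  show "((\<lambda>z. \<i> * p z - \<i> * cnj (q z)) has_derivative (\<lambda>h. of_real (Re h) * (\<i> * p' z - \<i> * cnj (q' z)) + of_real (Im h) * (- p' z - cnj (q' z)))) (at z)"
    using has_derivative_diff[OF has_derivative_mult_right[OF dp', of \<i>] has_derivative_mult_right[OF has_derivative_cnj[OF dq'], of \<i>]]
    by (rule has_derivative_eq_rhs) (auto simp: complex_eq_iff algebra_simps)
  show "p' z + cnj (q' z) + (- p' z - cnj (q' z)) = 0" by simp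
qed (intro continuous_intros cp cq)+




definition bas :: "real \<Rightarrow> real \<Rightarrow> real \<Rightarrow> int \<Rightarrow> complex \<Rightarrow> complex" where
  "bas X Y Z j z = of_real X * z powi j + of_real Y * cnj (z powi (-j)) + of_real Z * of_real (ln (cmod z))"
definition pb :: "real \<Rightarrow> real \<Rightarrow> int \<Rightarrow> complex \<Rightarrow> complex" where
  "pb X Z j z = of_real X * (of_int j * z powi (j - 1)) + of_real Z / (2 * z)"
definition qb :: "real \<Rightarrow> real \<Rightarrow> int \<Rightarrow> complex \<Rightarrow> complex" where
  "qb Y Z j z = of_real Y * (of_int (-j) * z powi (-j - 1)) + of_real Z / (2 * z)"
definition pb' :: "real \<Rightarrow> real \<Rightarrow> int \<Rightarrow> complex \<Rightarrow> complex" where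
  "pb' X Z j z = of_real X * (of_int j * (of_int (j - 1) * z powi (j - 1 - 1))) - of_real Z / (2 * z^2)"
definition qb' :: "real \<Rightarrow> real \<Rightarrow> int \<Rightarrow> complex \<Rightarrow> complex" where
  "qb' Y Z j z = of_real Y * (of_int (-j) * (of_int (-j - 1) * z powi (-j - 1 - 1))) - of_real Z / (2 * z^2)"

lemma ln_cmod_deriv:
  assumes z: "(z::complex) \<noteq> 0"
  shows "((\<lambda>z. of_real (ln (cmod z)) :: complex) has_derivative (\<lambda>h. h / (2*z) + cnj (h / (2*z)))) (at z)"
proof -
  have pos: "0 < Re z ^ 2 + Im z ^ 2" using z
    by (metis add_pos_nonneg complex_eq_0 not_less_iff_gr_or_eq sum_power2_gt_zero_iff zero_le_power2)
  have "((\<lambda>z. ln (Re z ^ 2 + Im z ^ 2) / 2) has_derivative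
      (\<lambda>h. (2 * Re z * Re h + 2 * Im z * Im h) / (Re z ^ 2 + Im z ^ 2) / 2)) (at z)"
    using pos by (auto intro!: derivative_eq_intros simp: field_simps power2_eq_square)
  from bounded_linear.has_derivative[OF bounded_linear_of_real this]
  have "((\<lambda>z. of_real (ln (Re z ^ 2 + Im z ^ 2) / 2) :: complex) has_derivative
      (\<lambda>h. of_real ((2 * Re z * Re h + 2 * Im z * Im h) / (Re z ^ 2 + Im z ^ 2) / 2))) (at z)" .
  note d0 = this
  have eqf: "(\<lambda>h. of_real ((2 * Re z * Re h + 2 * Im z * Im h) / (Re z ^ 2 + Im z ^ 2) / 2) :: complex)
      = (\<lambda>h. h / (2*z) + cnj (h / (2*z)))"
  proof (rule ext)
    fix h :: complex
    have e1: "h / (2*z) = (h/z)/2" by simp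
    have gen: "x/2 + cnj (x/2) = of_real (Re x)" for x :: complex by (simp add: complex_eq_iff)
    have e2: "h / (2*z) + cnj (h / (2*z)) = of_real (Re (h/z))"
      unfolding e1 by (rule gen)
    have e3a: "Re (h/z) = (Re z * Re h + Im z * Im h) / (Re z ^ 2 + Im z ^ 2)"
      by (simp add: Re_divide cmod_power2 algebra_simps)
    have e3b: "2 * Re z * Re h + 2 * Im z * Im h = 2 * (Re z * Re h + Im z * Im h)" by (simp add: algebra_simps)
    have e3: "Re (h/z) = (2 * Re z * Re h + 2 * Im z * Im h) / (Re z ^ 2 + Im z ^ 2) / 2"
    proof -
      have gen2: "(2*x)/b/2 = x/(b::real)" for x b by simp
      show ?thesis unfolding e3a e3b gen2 ..
    qed
    show "of_real ((2 * Re z * Re h + 2 * Im z * Im h) / (Re z ^ 2 + Im z ^ 2) / 2) = h / (2*z) + cnj (h / (2*z))"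
      unfolding e2 e3 ..
  qed
  have d: "((\<lambda>z. of_real (ln (Re z ^ 2 + Im z ^ 2) / 2) :: complex) has_derivative
      (\<lambda>h. h / (2*z) + cnj (h / (2*z)))) (at z)"
    using d0 unfolding eqf .
  show ?thesis
  proof (rule has_derivative_transform_within_open[OF d, of "- {0}"])
    show "open (- {0::complex})" by auto
    show "z \<in> - {0}" using z by auto
    fix x :: complex assume "x \<in> - {0}"
    then have "x \<noteq> 0" by auto
    then have "0 < Re x ^ 2 + Im x ^ 2"
      by (metis add_pos_nonneg complex_eq_0 not_less_iff_gr_or_eq sum_power2_gt_zero_iff zero_le_power2)
    then show "of_real (ln (Re x ^ 2 + Im x ^ 2) / 2) = (of_real (ln (cmod x)) :: complex)"
      by (simp add: cmod_def ln_sqrt)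
  qed
qed

lemma bas_deriv:
  assumes z: "z \<noteq> 0"
  shows "(bas X Y Z j has_derivative (\<lambda>h. pb X Z j z * h + cnj (qb Y Z j z * h))) (at z)"
proof -
  note d1 = has_derivative_power_int'[OF z, of j UNIV]
  note d2 = has_derivative_cnj[OF has_derivative_power_int'[OF z, of "-j" UNIV]]
  note d3 = ln_cmod_deriv[OF z]
  have "(bas X Y Z j has_derivative (\<lambda>h. of_real X * (h * (of_int j * z powi (j - 1)))
       + of_real Y * cnj (h * (of_int (-j) * z powi (-j - 1))) + of_real Z * (h / (2*z) + cnj (h / (2*z))))) (at z)"
    unfolding bas_def
    by (intro has_derivative_add has_derivative_mult_right d1 d2 d3)
  then show ?thesis
    by (rule has_derivative_eq_rhs) (auto simp: fun_eq_iff pb_def qb_def algebra_simps)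
qed

lemma pb_deriv:
  assumes z: "z \<noteq> 0"
  shows "(pb X Z j has_field_derivative pb' X Z j z) (at z)"
  unfolding pb_def pb'_def using z
  by (auto intro!: derivative_eq_intros simp: field_simps power2_eq_square)

lemma qb_deriv:
  assumes z: "z \<noteq> 0"
  shows "(qb Y Z j has_field_derivative qb' Y Z j z) (at z)"
  unfolding qb_def qb'_def using z
  by (auto intro!: derivative_eq_intros simp: field_simps power2_eq_square)

lemma pb'_cont: "continuous_on (- {0}) (pb' X Z j)"
  unfolding pb'_def by (intro continuous_intros) auto

lemma qb'_cont: "continuous_on (- {0}) (qb' Y Z j)"
  unfolding qb'_def by (intro continuous_intros) auto

lemma pb_cont: "continuous_on (- {0}) (pb X Z j)"
  unfolding pb_def by (intro continuous_intros) auto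

lemma qb_cont: "continuous_on (- {0}) (qb Y Z j)"
  unfolding qb_def by (intro continuous_intros) auto

definition candf :: "(int \<Rightarrow> complex) \<Rightarrow> int set \<Rightarrow> (int \<Rightarrow> real) \<Rightarrow> (int \<Rightarrow> real) \<Rightarrow> (int \<Rightarrow> real) \<Rightarrow> complex \<Rightarrow> complex" where
  "candf a S X Y Z z = (\<Sum>j\<in>S. a j * bas (X j) (Y j) (Z j) j z)"
definition candp where "candp a S X Z z = (\<Sum>j\<in>S. a j * pb (X j) (Z j) j z)"
definition candq where "candq a S Y Z z = (\<Sum>j\<in>S. cnj (a j) * qb (Y j) (Z j) j z)"
definition candp' where "candp' a S X Z z = (\<Sum>j\<in>S. a j * pb' (X j) (Z j) j z)"
definition candq' where "candq' a S Y Z z = (\<Sum>j\<in>S. cnj (a j) * qb' (Y j) (Z j) j z)"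

lemma cand_deriv:
  assumes z: "z \<noteq> 0"
  shows "(candf a S X Y Z has_derivative (\<lambda>h. candp a S X Z z * h + cnj (candq a S Y Z z * h))) (at z)"
proof -
  have "((\<lambda>z. \<Sum>j\<in>S. a j * bas (X j) (Y j) (Z j) j z) has_derivative
      (\<lambda>h. \<Sum>j\<in>S. a j * (pb (X j) (Z j) j z * h + cnj (qb (Y j) (Z j) j z * h)))) (at z)"
    by (intro has_derivative_sum has_derivative_mult_right bas_deriv z)
  moreover have "(\<lambda>h. \<Sum>j\<in>S. a j * (pb (X j) (Z j) j z * h + cnj (qb (Y j) (Z j) j z * h)))
      = (\<lambda>h. candp a S X Z z * h + cnj (candq a S Y Z z * h))"
    by (auto simp: fun_eq_iff candp_def candq_def sum_distrib_right sum_distrib_left sum.distrib algebra_simps)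
  ultimately show ?thesis unfolding candf_def by simp
qed

lemma candp_deriv: "z \<noteq> 0 \<Longrightarrow> (candp a S X Z has_field_derivative candp' a S X Z z) (at z)"
  unfolding candp_def candp'_def by (intro DERIV_sum DERIV_cmult pb_deriv)

lemma candq_deriv: "z \<noteq> 0 \<Longrightarrow> (candq a S Y Z has_field_derivative candq' a S Y Z z) (at z)"
  unfolding candq_def candq'_def by (intro DERIV_sum DERIV_cmult qb_deriv)

lemma candp'_cont: "continuous_on (- {0}) (candp' a S X Z)"
  unfolding candp'_def by (intro continuous_intros pb'_cont)
lemma candq'_cont: "continuous_on (- {0}) (candq' a S Y Z)"
  unfolding candq'_def by (intro continuous_intros qb'_cont)
lemma candp_cont: "continuous_on (- {0}) (candp a S X Z)"
  unfolding candp_def by (intro continuous_intros pb_cont)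
lemma candq_cont: "continuous_on (- {0}) (candq a S Y Z)"
  unfolding candq_def by (intro continuous_intros qb_cont)

lemma cand_goodfun:
  "goodfun (- {0}) (candf a S X Y Z) (\<lambda>z. candp a S X Z z + cnj (candq a S Y Z z))
     (\<lambda>z. \<i> * candp a S X Z z - \<i> * cnj (candq a S Y Z z))
     (\<lambda>z. candp' a S X Z z + cnj (candq' a S Y Z z)) (\<lambda>z. \<i> * candp' a S X Z z - \<i> * cnj (candq' a S Y Z z))
     (\<lambda>z. \<i> * candp' a S X Z z - \<i> * cnj (candq' a S Y Z z)) (\<lambda>z. - candp' a S X Z z - cnj (candq' a S Y Z z))"
proof (rule goodfun_pq)
  show "open (- {0::complex})" by auto
  show "(candf a S X Y Z has_derivative (\<lambda>h. candp a S X Z z * h + cnj (candq a S Y Z z * h))) (at z)"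
    if "z \<in> - {0}" for z using that by (intro cand_deriv) auto
  show "(candp a S X Z has_field_derivative candp' a S X Z z) (at z)"
    if "z \<in> - {0}" for z using that by (intro candp_deriv) auto
  show "(candq a S Y Z has_field_derivative candq' a S Y Z z) (at z)"
    if "z \<in> - {0}" for z using that by (intro candq_deriv) auto
qed (rule candp'_cont candq'_cont)+




lemma polar_powi:
  assumes "R > 0" shows "(of_real R * cis t) powi n = of_real (R powi n) * cis (of_int n * t)"
  by (simp add: power_int_mult_distrib cis_power_int)

lemma bas_polar:
  assumes R: "R > 0"
  shows "bas X Y Z j (of_real R * cis t) = of_real (X * R powi j + Y * R powi (-j)) * cis (of_int j * t) + of_real (Z * ln R)"
proof -
  have e1: "(of_real R * cis t) powi j = of_real (R powi j) * cis (of_int j * t)" by (rule polar_powi[OF R])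
  have e2: "cnj ((of_real R * cis t) powi (-j)) = of_real (R powi (-j)) * cis (of_int j * t)"
    unfolding polar_powi[OF R] by (simp add: cis_cnj del: of_real_power_int complex_cnj_power_int)
  have e3: "cmod (of_real R * cis t) = R" using R by (simp add: norm_mult)
  show ?thesis unfolding bas_def e1 e2 e3 by (simp add: algebra_simps del: of_real_power_int)
qed

lemma rad_polar:
  assumes R: "R > 0"
  shows "pb X Z j (of_real R * cis t) * cis t + cnj (qb Y Z j (of_real R * cis t) * cis t)
    = of_real (of_int j * X * R powi (j - 1) - of_int j * Y * R powi (- j - 1)) * cis (of_int j * t) + of_real (Z / R)"
proof -
  have c1: "cis (of_int (j - 1) * t) * cis t = cis (of_int j * t)" by (simp add: cis_mult algebra_simps)
  have c2: "cnj (cis (of_int (- j - 1) * t)) * cnj (cis t) = cis (of_int j * t)" by (simp add: cis_mult cis_cnj algebra_simps)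
  have c3: "of_real Z / (2 * (of_real R * cis t)) * cis t = (of_real (Z / (2*R)) :: complex)"
    using R by (simp add: field_simps)
  have "pb X Z j (of_real R * cis t) * cis t = of_real (of_int j * X * R powi (j - 1)) * cis (of_int j * t) + of_real (Z / (2*R))"
    unfolding pb_def polar_powi[OF R] using c1 c3 by (simp add: algebra_simps)
  moreover have "cnj (qb Y Z j (of_real R * cis t) * cis t) = of_real (- of_int j * Y * R powi (- j - 1)) * cis (of_int j * t) + of_real (Z / (2*R))"
  proof -
    have "qb Y Z j (of_real R * cis t) * cis t = of_real (- of_int j * Y * R powi (- j - 1)) * (cis (of_int (- j - 1) * t) * cis t) + of_real (Z / (2*R))"
      unfolding qb_def polar_powi[OF R] using c3 by (simp add: algebra_simps)
    then show ?thesis by (simp only: complex_cnj_add complex_cnj_mult complex_cnj_complex_of_real c2)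
  qed
  ultimately show ?thesis by (simp add: algebra_simps)
qed




lemma powi_conv:
  fixes x :: real
  assumes x: "x > 0"
  shows "x powi (2*n) = (x powi n)^2" "x powi (-n) = 1 / x powi n" "x powi (n - 1) = x powi n / x"
    "x powi (-n - 1) = 1 / (x powi n * x)" "x powi (n + 1) = x powi n * x"
    "x powi (2*n+1) = (x powi n)^2 * x" "x powi (2*n - 1) = (x powi n)^2 / x"
proof -
  have x0: "x \<noteq> 0" using x by simp
  show s: "x powi (2*n) = (x powi n)^2"
    by (simp only: mult_2 power_int_add[OF disjI1[OF x0]] power2_eq_square)
  show "x powi (-n) = 1 / x powi n" by (simp add: power_int_minus divide_inverse)
  show "x powi (n - 1) = x powi n / x" by (simp add: power_int_diff[OF disjI1[OF x0]])
  show "x powi (-n - 1) = 1 / (x powi n * x)"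
    by (simp add: power_int_diff[OF disjI1[OF x0]] power_int_minus divide_inverse)
  show "x powi (n + 1) = x powi n * x" by (simp add: power_int_add[OF disjI1[OF x0]])
  show "x powi (2*n+1) = (x powi n)^2 * x" by (simp only: power_int_add[OF disjI1[OF x0]] s power_int_1_right)
  show "x powi (2*n - 1) = (x powi n)^2 / x" by (simp only: power_int_diff[OF disjI1[OF x0]] s power_int_1_right)
qed

lemma powi_pos: "(x::real) > 0 \<Longrightarrow> x powi n > 0"
  by simp

lemma Cj_pq:
  assumes "0 < Rid" "0 < Rd"
  shows "Cj Rid Rd j = 8 * Rd * (Rid powi j)^2 * (Rd powi j)^2 / (Rid * ((Rid powi j)^2 + (Rd powi j)^2)^2)"
proof (cases "j \<ge> 0")
  case True
  then have a: "\<bar>j\<bar> = j" by simp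
  have p: "Rid powi j > 0" "Rd powi j > 0" using assms by simp_all
  show ?thesis unfolding Cj_def a powi_conv(1,6,7)[OF assms(1)] powi_conv(1,6,7)[OF assms(2)] using assms p
    by (simp add: field_simps)
next
  case False
  then have a: "\<bar>j\<bar> = - j" by simp
  have b1: "Rid powi (- j) = 1 / Rid powi j" "Rd powi (- j) = 1 / Rd powi j"
    using assms by (simp_all add: powi_conv)
  have p: "Rid powi j > 0" "Rd powi j > 0" using assms by simp_all
  show ?thesis unfolding Cj_def a powi_conv(1,6,7)[OF assms(1)] powi_conv(1,6,7)[OF assms(2)] b1 using assms p
    by (simp add: field_simps)
qed

definition Xphi :: "real \<Rightarrow> real \<Rightarrow> int \<Rightarrow> real" where
  "Xphi Rid Rd j = Rid powi j / (Rid powi (2*j) + Rd powi (2*j))"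
definition Yphi :: "real \<Rightarrow> real \<Rightarrow> int \<Rightarrow> real" where
  "Yphi Rid Rd j = Xphi Rid Rd j * Rd powi (2*j)"
definition beta :: "real \<Rightarrow> real \<Rightarrow> int \<Rightarrow> real" where
  "beta Rid Rd j = 2 * Rid powi j * Rd powi j / (Rid powi (2*j) + Rd powi (2*j))"
definition Xpsi :: "real \<Rightarrow> real \<Rightarrow> int \<Rightarrow> real" where
  "Xpsi Rid Rd j = (if j = 0 then Rd * ln Rid
     else - 2 * beta Rid Rd j * Rd powi (j+1) / (of_int j * (Rd powi (2*j) + Rid powi (2*j))))"
definition Ypsi :: "real \<Rightarrow> real \<Rightarrow> int \<Rightarrow> real" where
  "Ypsi Rid Rd j = (if j = 0 then Rd * ln Rid else - Xpsi Rid Rd j * Rid powi (2*j))"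
definition Zpsi :: "real \<Rightarrow> int \<Rightarrow> real" where
  "Zpsi Rd j = (if j = 0 then -2 * Rd else 0)"

context
  fixes Rid Rd :: real
  assumes pos: "0 < Rid" "0 < Rd"
begin

lemma pq_pos: "Rid powi j > 0" "Rd powi j > 0" using pos by simp_all

lemmas cv = powi_conv[OF pos(1)] powi_conv[OF pos(2)]

lemma phi_val_id: "Xphi Rid Rd j * Rid powi j + Yphi Rid Rd j * Rid powi (-j) = 1"
proof -
  obtain p q where pq: "Rid powi j = p" "Rd powi j = q" "p > 0" "q > 0" using pq_pos by blast
  obtain D where D: "p^2 + q^2 = D" "D > 0" using pq by (metis add_pos_pos zero_less_power)
  have D2: "q^2 + p^2 = D" using D by (simp add: add.commute)
  have Dd: "D = p * p + q * q" using D by (simp add: power2_eq_square)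
  show ?thesis unfolding Yphi_def Xphi_def cv pq(1,2) D(1) D2
    using pq D pos apply (simp add: field_simps)
    apply (simp_all add: Dd algebra_simps power2_eq_square)
    done
qed

lemma phi_rad_d: "of_int j * Xphi Rid Rd j * Rd powi (j - 1) - of_int j * Yphi Rid Rd j * Rd powi (- j - 1) = 0"
proof -
  obtain p q where pq: "Rid powi j = p" "Rd powi j = q" "p > 0" "q > 0" using pq_pos by blast
  obtain D where D: "p^2 + q^2 = D" "D > 0" using pq by (metis add_pos_pos zero_less_power)
  have D2: "q^2 + p^2 = D" using D by (simp add: add.commute)
  have Dd: "D = p * p + q * q" using D by (simp add: power2_eq_square)
  show ?thesis unfolding Yphi_def Xphi_def cv pq(1,2) D(1) D2
    using pq D pos apply (simp add: field_simps)
    apply (simp_all add: Dd algebra_simps power2_eq_square)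
    done
qed

lemma phi_val_d: "Xphi Rid Rd j * Rd powi j + Yphi Rid Rd j * Rd powi (-j) = beta Rid Rd j"
proof -
  obtain p q where pq: "Rid powi j = p" "Rd powi j = q" "p > 0" "q > 0" using pq_pos by blast
  obtain D where D: "p^2 + q^2 = D" "D > 0" using pq by (metis add_pos_pos zero_less_power)
  have D2: "q^2 + p^2 = D" using D by (simp add: add.commute)
  have Dd: "D = p * p + q * q" using D by (simp add: power2_eq_square)
  show ?thesis unfolding Yphi_def Xphi_def beta_def cv pq(1,2) D(1) D2
    using pq D pos apply (simp add: field_simps)
    apply (simp_all add: Dd algebra_simps power2_eq_square)
    done
qed

lemma psi_val_id: "j \<noteq> 0 \<Longrightarrow> Xpsi Rid Rd j * Rid powi j + Ypsi Rid Rd j * Rid powi (-j) = 0"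
proof -
  obtain p q where pq: "Rid powi j = p" "Rd powi j = q" "p > 0" "q > 0" using pq_pos by blast
  obtain D where D: "p^2 + q^2 = D" "D > 0" using pq by (metis add_pos_pos zero_less_power)
  have D2: "q^2 + p^2 = D" using D by (simp add: add.commute)
  have Dd: "D = p * p + q * q" using D by (simp add: power2_eq_square)
  show "j \<noteq> 0 \<Longrightarrow> ?thesis" unfolding Ypsi_def cv pq(1,2) D(1) D2
    using pq D pos apply (simp add: field_simps)
    apply (simp_all add: Dd algebra_simps power2_eq_square)
    done
qed

lemma psi_rad_d: "j \<noteq> 0 \<Longrightarrow>
   of_int j * Xpsi Rid Rd j * Rd powi (j - 1) - of_int j * Ypsi Rid Rd j * Rd powi (- j - 1) = - 2 * beta Rid Rd j"
proof -
  obtain p q where pq: "Rid powi j = p" "Rd powi j = q" "p > 0" "q > 0" using pq_pos by blast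
  obtain D where D: "p^2 + q^2 = D" "D > 0" using pq by (metis add_pos_pos zero_less_power)
  have D2: "q^2 + p^2 = D" using D by (simp add: add.commute)
  have Dd: "D = p * p + q * q" using D by (simp add: power2_eq_square)
  show "j \<noteq> 0 \<Longrightarrow> ?thesis" unfolding Ypsi_def Xpsi_def beta_def cv pq(1,2) D(1) D2
    using pq D pos apply (simp add: field_simps)
    apply (simp_all add: Dd algebra_simps power2_eq_square)
    done
qed

lemma psi_rad_id: "j \<noteq> 0 \<Longrightarrow>
   of_int j * Xpsi Rid Rd j * Rid powi (j - 1) - of_int j * Ypsi Rid Rd j * Rid powi (- j - 1) = - Cj Rid Rd j"
proof -
  obtain p q where pq: "Rid powi j = p" "Rd powi j = q" "p > 0" "q > 0" using pq_pos by blast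
  obtain D where D: "p^2 + q^2 = D" "D > 0" using pq by (metis add_pos_pos zero_less_power)
  have D2: "q^2 + p^2 = D" using D by (simp add: add.commute)
  have Dd: "D = p * p + q * q" using D by (simp add: power2_eq_square)
  show "j \<noteq> 0 \<Longrightarrow> ?thesis" unfolding Ypsi_def Xpsi_def beta_def Cj_pq[OF pos] cv pq(1,2) D(1) D2
    using pq D pos apply (simp add: field_simps)
    apply (simp_all add: Dd algebra_simps power2_eq_square)
    done
qed

end




lemma radial_unique:
  fixes f g :: "complex \<Rightarrow> complex" and Df Dg :: "complex \<Rightarrow> complex"
  assumes "0 < Rid" "Rid < Rd"
  and eq: "\<And>z. z \<in> cl_annulus Rid Rd \<Longrightarrow> f z = g z"
  and df: "(f has_derivative Df) (at (of_real Rid * cis t) within cl_annulus Rid Rd)"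
  and dg: "(g has_derivative Dg) (at (of_real Rid * cis t))"
  shows "Df (cis t) = Dg (cis t)"
proof -
  define \<gamma> where "\<gamma> = (\<lambda>s::real. (of_real s :: complex) * cis t)"
  have dga: "(\<gamma> has_derivative (\<lambda>h. of_real h * cis t)) (at Rid within {Rid..Rd})"
    unfolding \<gamma>_def by (auto intro!: derivative_eq_intros)
  have sub: "\<gamma> ` {Rid..Rd} \<subseteq> cl_annulus Rid Rd"
    using assms(1,2) by (auto simp: \<gamma>_def cl_annulus_def norm_mult)
  have lin: "D (of_real h * cis t) = h *\<^sub>R D (cis t)" if "bounded_linear D" for D :: "complex \<Rightarrow> complex" and h
  proof -
    have "of_real h * cis t = h *\<^sub>R cis t" by (simp add: scaleR_conv_of_real)
    then show ?thesis using that by (simp add: bounded_linear.linear linear_scale)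
  qed
  have "((f \<circ> \<gamma>) has_derivative (Df \<circ> (\<lambda>h. of_real h * cis t))) (at Rid within {Rid..Rd})"
    by (rule diff_chain_within[OF dga]) (rule has_derivative_subset[OF _ sub], simp add: \<gamma>_def df)
  then have vf: "((f \<circ> \<gamma>) has_vector_derivative Df (cis t)) (at Rid within {Rid..Rd})"
    unfolding has_vector_derivative_def
    by (rule has_derivative_eq_rhs) (auto simp: fun_eq_iff lin[OF has_derivative_bounded_linear[OF df]])
  have "((g \<circ> \<gamma>) has_derivative (Dg \<circ> (\<lambda>h. of_real h * cis t))) (at Rid within {Rid..Rd})"
    by (rule diff_chain_within[OF dga]) (rule has_derivative_at_withinI, simp add: \<gamma>_def dg)
  then have vg: "((g \<circ> \<gamma>) has_vector_derivative Dg (cis t)) (at Rid within {Rid..Rd})"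
    unfolding has_vector_derivative_def
    by (rule has_derivative_eq_rhs) (auto simp: fun_eq_iff lin[OF has_derivative_bounded_linear[OF dg]])
  have vf': "((g \<circ> \<gamma>) has_vector_derivative Df (cis t)) (at Rid within {Rid..Rd})"
  proof (rule has_vector_derivative_transform_within[OF vf zero_less_one])
    show "Rid \<in> {Rid..Rd}" using assms by auto
    fix x assume "x \<in> {Rid..Rd}"
    then have "\<gamma> x \<in> cl_annulus Rid Rd" using sub by blast
    then show "(f \<circ> \<gamma>) x = (g \<circ> \<gamma>) x" using eq by simp
  qed
  show ?thesis
    by (rule vector_derivative_unique_within_closed_interval[of Rid Rd Rid])
       (use assms vf' vg in auto)
qed

lemma cand_val:
  assumes "R > 0"
  shows "candf a S X Y Z (of_real R * cis t) = (\<Sum>j\<in>S. a j * (of_real (X j * R powi j + Y j * R powi (-j)) * cis (of_int j * t) + of_real (Z j * ln R)))"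
  unfolding candf_def using bas_polar[OF assms] by simp

lemma cand_rad:
  assumes "R > 0"
  shows "candp a S X Z (of_real R * cis t) * cis t + cnj (candq a S Y Z (of_real R * cis t) * cis t)
    = (\<Sum>j\<in>S. a j * (of_real (of_int j * X j * R powi (j - 1) - of_int j * Y j * R powi (- j - 1)) * cis (of_int j * t) + of_real (Z j / R)))"
proof -
  have "candp a S X Z z * h + cnj (candq a S Y Z z * h) = (\<Sum>j\<in>S. a j * (pb (X j) (Z j) j z * h + cnj (qb (Y j) (Z j) j z * h)))" for z h
    by (simp add: candp_def candq_def sum_distrib_right sum_distrib_left sum.distrib algebra_simps)
  then show ?thesis using rad_polar[OF assms] by simp
qed

context
  fixes Rid Rd :: real
  assumes pos: "0 < Rid" "0 < Rd"
begin

lemma phi_id: "candf a S (Xphi Rid Rd) (Yphi Rid Rd) (\<lambda>_. 0) (of_real Rid * cis t) = (\<Sum>j\<in>S. a j * cis (of_int j * t))"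
  using phi_val_id[OF pos] by (simp add: cand_val[OF pos(1)])

lemma phi_d: "candf a S (Xphi Rid Rd) (Yphi Rid Rd) (\<lambda>_. 0) (of_real Rd * cis t) = (\<Sum>j\<in>S. a j * (of_real (beta Rid Rd j) * cis (of_int j * t)))"
  using phi_val_d[OF pos] by (simp add: cand_val[OF pos(2)])

lemma phi_rd: "candp a S (Xphi Rid Rd) (\<lambda>_. 0) (of_real Rd * cis t) * cis t + cnj (candq a S (Yphi Rid Rd) (\<lambda>_. 0) (of_real Rd * cis t) * cis t) = 0"
  unfolding cand_rad[OF pos(2)] phi_rad_d[OF pos] by simp

lemma beta0: "beta Rid Rd 0 = 1" by (simp add: beta_def)
lemma Cj0: "Cj Rid Rd 0 = 2 * Rd / Rid" using pos by (simp add: Cj_def power_int_minus field_simps)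

lemma psi_id: "candf a S (Xpsi Rid Rd) (Ypsi Rid Rd) (Zpsi Rd) (of_real Rid * cis t) = 0"
  unfolding cand_val[OF pos(1)]
proof (rule sum.neutral, rule ballI)
  fix j assume "j \<in> S"
  show "a j * (of_real (Xpsi Rid Rd j * Rid powi j + Ypsi Rid Rd j * Rid powi (-j)) * cis (of_int j * t) + of_real (Zpsi Rd j * ln Rid)) = 0"
  proof (cases "j = 0")
    case True then show ?thesis by (simp add: Xpsi_def Ypsi_def Zpsi_def)
  next
    case False then show ?thesis using psi_val_id[OF pos False] by (simp add: Zpsi_def)
  qed
qed

lemma psi_rd: "candp a S (Xpsi Rid Rd) (Zpsi Rd) (of_real Rd * cis t) * cis t + cnj (candq a S (Ypsi Rid Rd) (Zpsi Rd) (of_real Rd * cis t) * cis t)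
   = (\<Sum>j\<in>S. a j * (of_real (- 2 * beta Rid Rd j) * cis (of_int j * t)))"
  unfolding cand_rad[OF pos(2)]
proof (rule sum.cong[OF refl])
  fix j assume "j \<in> S"
  show "a j * (of_real (of_int j * Xpsi Rid Rd j * Rd powi (j - 1) - of_int j * Ypsi Rid Rd j * Rd powi (- j - 1)) * cis (of_int j * t) + of_real (Zpsi Rd j / Rd))
     = a j * (of_real (- 2 * beta Rid Rd j) * cis (of_int j * t))"
  proof (cases "j = 0")
    case True then show ?thesis using pos by (simp add: Zpsi_def beta0)
  next
    case False then show ?thesis using psi_rad_d[OF pos False] by (simp add: Zpsi_def)
  qed
qed

lemma psi_rid: "candp a S (Xpsi Rid Rd) (Zpsi Rd) (of_real Rid * cis t) * cis t + cnj (candq a S (Ypsi Rid Rd) (Zpsi Rd) (of_real Rid * cis t) * cis t)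
   = (\<Sum>j\<in>S. a j * (of_real (- Cj Rid Rd j) * cis (of_int j * t)))"
  unfolding cand_rad[OF pos(1)]
proof (rule sum.cong[OF refl])
  fix j assume "j \<in> S"
  show "a j * (of_real (of_int j * Xpsi Rid Rd j * Rid powi (j - 1) - of_int j * Ypsi Rid Rd j * Rid powi (- j - 1)) * cis (of_int j * t) + of_real (Zpsi Rd j / Rid))
     = a j * (of_real (- Cj Rid Rd j) * cis (of_int j * t))"
  proof (cases "j = 0")
    case True then show ?thesis using pos by (simp add: Zpsi_def Cj0)
  next
    case False then show ?thesis using psi_rad_id[OF pos False] by (simp add: Zpsi_def)
  qed
qed

end




theorem mainTheorem4:
  fixes Rid Rd \<rho> :: real
    and ubar qbar \<omega>s \<omega>k \<omega>k1 :: "real \<Rightarrow> complex"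
    and vs vk vh :: "complex \<Rightarrow> complex"
    and vs' vk' vh' :: "complex \<Rightarrow> complex \<Rightarrow> complex"
    and M N :: nat and a :: "int \<Rightarrow> complex"
  assumes "0 < Rid" and "Rid < Rd"
    and exact: "mixed_bvp_solution Rid Rd qbar \<omega>s vs vs'"
    and exact_data: "\<forall>\<theta>. vs (of_real Rd * cis \<theta>) = ubar \<theta>"
    and primary: "mixed_bvp_solution Rid Rd qbar \<omega>k vk vk'"
    and adjoint: "mixed_bvp_solution Rid Rd (\<lambda>\<theta>. 2 * (vk (of_real Rd * cis \<theta>) - ubar \<theta>)) (\<lambda>_. 0) vh vh'"
    and "\<rho> > 0"
    and step: "\<forall>\<theta>. \<omega>k1 \<theta> = \<omega>k \<theta> - of_real \<rho> * Jprime Rid vh' \<theta>"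
    and "M \<le> N"
    and error: "\<forall>\<theta>. \<omega>s \<theta> - \<omega>k \<theta> = (\<Sum>j\<in>freqs M N. a j * cis (of_int j * \<theta>))"
  shows "(\<forall>\<theta>. Jprime Rid vh' \<theta> = - (\<Sum>j\<in>freqs M N. of_real (Cj Rid Rd j) * a j * cis (of_int j * \<theta>)))
       \<and> (\<forall>\<theta>. \<omega>s \<theta> - \<omega>k1 \<theta> = (\<Sum>j\<in>freqs M N. (1 - of_real (Cj Rid Rd j * \<rho>)) * a j * cis (of_int j * \<theta>)))"
proof -
  have p1: "0 < Rid" and p2: "Rid < Rd" by fact+
  have pos: "0 < Rid" "0 < Rd" using p1 p2 by auto
  define S where "S = freqs M N"
  have nz: "z \<noteq> 0" if "z \<in> cl_annulus Rid Rd" for z using that p1 by (auto simp: cl_annulus_def)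
  have ann_sub: "annulus Rid Rd \<subseteq> - {0}" using p1 by (auto simp: annulus_def)
  have cl_sub: "cl_annulus Rid Rd \<subseteq> - {0}" using nz by auto
  have inT: "of_real r * cis t \<in> cl_annulus Rid Rd" if "Rid \<le> r" "r \<le> Rd" for r t
    using polar_in_cl_annulus[OF p1 that] .
  have sol: "harmonic_C2_on (annulus Rid Rd) v \<and> (\<forall>z\<in>cl_annulus Rid Rd. (v has_derivative v' z) (at z within cl_annulus Rid Rd))
     \<and> (\<forall>h. continuous_on (cl_annulus Rid Rd) (\<lambda>z. v' z h)) \<and> (\<forall>t. v' (of_real Rd * cis t) (cis t) = g t)
     \<and> (\<forall>t. v (of_real Rid * cis t) = w t)" if "mixed_bvp_solution Rid Rd g w v v'" for g w v v'
    using that unfolding mixed_bvp_solution_def C1_deriv_on_def normal_deriv_d_def by blast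
  obtain hs ds cs ns bs where "harmonic_C2_on (annulus Rid Rd) vs"
    "\<forall>z\<in>cl_annulus Rid Rd. (vs has_derivative vs' z) (at z within cl_annulus Rid Rd)"
    "\<forall>h. continuous_on (cl_annulus Rid Rd) (\<lambda>z. vs' z h)" "\<forall>t. vs' (of_real Rd * cis t) (cis t) = qbar t"
    "\<forall>t. vs (of_real Rid * cis t) = \<omega>s t" using sol[OF exact] by blast
  note ex = this
  have "harmonic_C2_on (annulus Rid Rd) vk"
    "\<forall>z\<in>cl_annulus Rid Rd. (vk has_derivative vk' z) (at z within cl_annulus Rid Rd)"
    "\<forall>h. continuous_on (cl_annulus Rid Rd) (\<lambda>z. vk' z h)" "\<forall>t. vk' (of_real Rd * cis t) (cis t) = qbar t"
    "\<forall>t. vk (of_real Rid * cis t) = \<omega>k t" using sol[OF primary] by blast+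
  note pr = this
  have "harmonic_C2_on (annulus Rid Rd) vh"
    "\<forall>z\<in>cl_annulus Rid Rd. (vh has_derivative vh' z) (at z within cl_annulus Rid Rd)"
    "\<forall>h. continuous_on (cl_annulus Rid Rd) (\<lambda>z. vh' z h)" "\<forall>t. vh' (of_real Rd * cis t) (cis t) = 2 * (vk (of_real Rd * cis t) - ubar t)"
    "\<forall>t. vh (of_real Rid * cis t) = 0" using sol[OF adjoint] by blast+
  note ad = this
  note g1 = goodfun_diff[OF goodfun_diff[OF solution_goodfun[OF ex(1)] solution_goodfun[OF pr(1)]]
      goodfun_subset[OF cand_goodfun[of a S "Xphi Rid Rd" "Yphi Rid Rd" "\<lambda>_. 0"] ann_sub]]
  have w1: "\<forall>z\<in>cl_annulus Rid Rd. vs z - vk z - candf a S (Xphi Rid Rd) (Yphi Rid Rd) (\<lambda>_. 0) z = 0"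
  proof (rule energy_goodfun[OF p1 p2 g1, of
        "\<lambda>z h. vs' z h - vk' z h - (candp a S (Xphi Rid Rd) (\<lambda>_. 0) z * h + cnj (candq a S (Yphi Rid Rd) (\<lambda>_. 0) z * h))"])
    show "((\<lambda>z. vs z - vk z - candf a S (Xphi Rid Rd) (Yphi Rid Rd) (\<lambda>_. 0) z) has_derivative
        (\<lambda>h. vs' z h - vk' z h - (candp a S (Xphi Rid Rd) (\<lambda>_. 0) z * h + cnj (candq a S (Yphi Rid Rd) (\<lambda>_. 0) z * h))))
        (at z within cl_annulus Rid Rd)" if "z \<in> cl_annulus Rid Rd" for z
      using ex(2) pr(2) that
      by (intro has_derivative_diff has_derivative_at_withinI[OF cand_deriv[OF nz[OF that]]]) auto
    show "continuous_on (cl_annulus Rid Rd) (\<lambda>z. vs' z h - vk' z h - (candp a S (Xphi Rid Rd) (\<lambda>_. 0) z * h + cnj (candq a S (Yphi Rid Rd) (\<lambda>_. 0) z * h)))" for h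
      using ex(3) pr(3) by (intro continuous_intros continuous_on_subset[OF candp_cont cl_sub] continuous_on_subset[OF candq_cont cl_sub]) auto
    show "vs' (of_real Rd * cis t) (cis t) - vk' (of_real Rd * cis t) (cis t) -
        (candp a S (Xphi Rid Rd) (\<lambda>_. 0) (of_real Rd * cis t) * cis t + cnj (candq a S (Yphi Rid Rd) (\<lambda>_. 0) (of_real Rd * cis t) * cis t)) = 0" for t
      unfolding phi_rd[OF pos] using ex(4) pr(4) by simp
    show "vs (of_real Rid * cis t) - vk (of_real Rid * cis t) - candf a S (Xphi Rid Rd) (Yphi Rid Rd) (\<lambda>_. 0) (of_real Rid * cis t) = 0" for t
      unfolding phi_id[OF pos] using ex(5) pr(5) error by (simp add: S_def)
  qed
  have vkd: "vk (of_real Rd * cis t) - ubar t = - (\<Sum>j\<in>S. a j * (of_real (beta Rid Rd j) * cis (of_int j * t)))" for t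
  proof -
    have "vs (of_real Rd * cis t) - vk (of_real Rd * cis t) - candf a S (Xphi Rid Rd) (Yphi Rid Rd) (\<lambda>_. 0) (of_real Rd * cis t) = 0"
      using w1 inT[of Rd t] p2 by auto
    then show ?thesis unfolding phi_d[OF pos] using exact_data by (auto simp: algebra_simps)
  qed
  note g2 = goodfun_diff[OF solution_goodfun[OF ad(1)]
      goodfun_subset[OF cand_goodfun[of a S "Xpsi Rid Rd" "Ypsi Rid Rd" "Zpsi Rd"] ann_sub]]
  have w2: "\<forall>z\<in>cl_annulus Rid Rd. vh z - candf a S (Xpsi Rid Rd) (Ypsi Rid Rd) (Zpsi Rd) z = 0"
  proof (rule energy_goodfun[OF p1 p2 g2, of
        "\<lambda>z h. vh' z h - (candp a S (Xpsi Rid Rd) (Zpsi Rd) z * h + cnj (candq a S (Ypsi Rid Rd) (Zpsi Rd) z * h))"])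
    show "((\<lambda>z. vh z - candf a S (Xpsi Rid Rd) (Ypsi Rid Rd) (Zpsi Rd) z) has_derivative
        (\<lambda>h. vh' z h - (candp a S (Xpsi Rid Rd) (Zpsi Rd) z * h + cnj (candq a S (Ypsi Rid Rd) (Zpsi Rd) z * h))))
        (at z within cl_annulus Rid Rd)" if "z \<in> cl_annulus Rid Rd" for z
      using ad(2) that
      by (intro has_derivative_diff has_derivative_at_withinI[OF cand_deriv[OF nz[OF that]]]) auto
    show "continuous_on (cl_annulus Rid Rd) (\<lambda>z. vh' z h - (candp a S (Xpsi Rid Rd) (Zpsi Rd) z * h + cnj (candq a S (Ypsi Rid Rd) (Zpsi Rd) z * h)))" for h
      using ad(3) by (intro continuous_intros continuous_on_subset[OF candp_cont cl_sub] continuous_on_subset[OF candq_cont cl_sub]) auto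
    show "vh' (of_real Rd * cis t) (cis t) -
        (candp a S (Xpsi Rid Rd) (Zpsi Rd) (of_real Rd * cis t) * cis t + cnj (candq a S (Ypsi Rid Rd) (Zpsi Rd) (of_real Rd * cis t) * cis t)) = 0" for t
    proof -
      have e1: "(\<Sum>j\<in>S. a j * (of_real (- 2 * beta Rid Rd j) * cis (of_int j * t)))
          = - 2 * (\<Sum>j\<in>S. a j * (of_real (beta Rid Rd j) * cis (of_int j * t)))"
        unfolding sum_distrib_left by (rule sum.cong) (simp_all add: algebra_simps)
      have e2: "vh' (of_real Rd * cis t) (cis t) = 2 * (vk (of_real Rd * cis t) - ubar t)" using ad(4) by blast
      show ?thesis unfolding psi_rd[OF pos] e1 e2 vkd by simp
    qed
    show "vh (of_real Rid * cis t) - candf a S (Xpsi Rid Rd) (Ypsi Rid Rd) (Zpsi Rd) (of_real Rid * cis t) = 0" for t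
      unfolding psi_id[OF pos] using ad(5) by simp
  qed
  have J: "Jprime Rid vh' t = - (\<Sum>j\<in>S. of_real (Cj Rid Rd j) * a j * cis (of_int j * t))" for t
  proof -
    have z0: "of_real Rid * cis t \<in> cl_annulus Rid Rd" using inT[of Rid t] p2 by auto
    have "vh' (of_real Rid * cis t) (cis t) =
        candp a S (Xpsi Rid Rd) (Zpsi Rd) (of_real Rid * cis t) * cis t + cnj (candq a S (Ypsi Rid Rd) (Zpsi Rd) (of_real Rid * cis t) * cis t)"
    proof (rule radial_unique[OF p1 p2, where f = vh and g = "candf a S (Xpsi Rid Rd) (Ypsi Rid Rd) (Zpsi Rd)"
        and Df = "vh' (of_real Rid * cis t)"
        and Dg = "\<lambda>h. candp a S (Xpsi Rid Rd) (Zpsi Rd) (of_real Rid * cis t) * h + cnj (candq a S (Ypsi Rid Rd) (Zpsi Rd) (of_real Rid * cis t) * h)"])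
      show "vh z = candf a S (Xpsi Rid Rd) (Ypsi Rid Rd) (Zpsi Rd) z" if "z \<in> cl_annulus Rid Rd" for z
        using w2 that by auto
      show "(vh has_derivative vh' (of_real Rid * cis t)) (at (of_real Rid * cis t) within cl_annulus Rid Rd)"
        using ad(2) z0 by auto
      show "(candf a S (Xpsi Rid Rd) (Ypsi Rid Rd) (Zpsi Rd) has_derivative
         (\<lambda>h. candp a S (Xpsi Rid Rd) (Zpsi Rd) (of_real Rid * cis t) * h + cnj (candq a S (Ypsi Rid Rd) (Zpsi Rd) (of_real Rid * cis t) * h)))
         (at (of_real Rid * cis t))"
        by (rule cand_deriv[OF nz[OF z0]])
    qed
    then have "vh' (of_real Rid * cis t) (cis t) = (\<Sum>j\<in>S. a j * (of_real (- Cj Rid Rd j) * cis (of_int j * t)))"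
      unfolding psi_rid[OF pos] .
    then show ?thesis unfolding Jprime_def normal_deriv_id_def
      by (simp add: sum_negf[symmetric] algebra_simps)
  qed
  show ?thesis
  proof (intro conjI allI)
    fix t
    show "Jprime Rid vh' t = - (\<Sum>j\<in>freqs M N. of_real (Cj Rid Rd j) * a j * cis (of_int j * t))"
      using J[of t] by (simp add: S_def)
    show "\<omega>s t - \<omega>k1 t = (\<Sum>j\<in>freqs M N. (1 - of_real (Cj Rid Rd j * \<rho>)) * a j * cis (of_int j * t))"
    proof -
      have e: "\<omega>s t - \<omega>k1 t = (\<Sum>j\<in>freqs M N. a j * cis (of_int j * t))
          - of_real \<rho> * (\<Sum>j\<in>freqs M N. of_real (Cj Rid Rd j) * a j * cis (of_int j * t))"
      proof -
        have "\<omega>s t - \<omega>k1 t = (\<omega>s t - \<omega>k t) + of_real \<rho> * Jprime Rid vh' t" using step by simp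
        then show ?thesis using error J[of t] by (simp add: S_def)
      qed
      show ?thesis unfolding e sum_distrib_left sum_subtractf[symmetric]
        by (rule sum.cong) (simp_all add: algebra_simps)
    qed
  qed
qed


end
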